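(* Let $1<q_1<q_2<\infty$. Then there exists a $2\pi$-periodic $\log$-H\"older continuous function $p:[0,2\pi]\to[q_1,q_2]$ (so $q_1\le p(\theta)\le q_2$ for all $\theta$) such that $H^{p(\cdot)}(\mathbb{D})\neq H^q(\mathbb{D})$ for every $q$ with $q_1\le q\le q_2$.
   Context: $\mathbb{D}$ is the open unit disk and $\mathbb{T}$ the unit circle. $p$ is $\log$-H\"older continuous if there is $C_{\log}>0$ with $|p(x)-p(y)|\le C_{\log}/\log(1/|x-y|)$ for all $x,y\in[0,2\pi]$. $L^{p(\cdot)}(\mathbb{T})$ is the space of measurable $f:\mathbb{T}\to\mathbb{C}$ with $\int_0^{2\pi}|f(e^{i\theta})|^{p(\theta)}\,d\theta<\infty$, with Luxemburg norm $\|f\|_{L^{p(\cdot)}(\mathbb{T})}=\inf\{\lambda>0:\int_0^{2\pi}|f(e^{i\theta})/\lambda|^{p(\theta)}d\theta\le1\}$. $H^{p(\cdot)}(\mathbb{D})$ is the space of analytic $f:\mathbb{D}\to\mathbb{C}$ with $\sup_{0\le r<1}\|f_r\|_{L^{p(\cdot)}(\mathbb{T})}<\infty$, where $f_r(\zeta)=f(r\zeta)$; $H^q(\mathbb{D})$ is the classical Hardy space (constant exponent $q$). *)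

theory Defs
  imports "HOL-Complex_Analysis.Complex_Analysis"
begin

text \<open>log-Hoelder continuity on [0,2pi]. The condition is only meaningful when
  0 < |x-y| < 1 (where log(1/|x-y|) > 0).\<close>
definition log_holder :: "(real \<Rightarrow> real) \<Rightarrow> bool" where
  "log_holder p \<longleftrightarrow> (\<exists>C>0. \<forall>x\<in>{0..2*pi}. \<forall>y\<in>{0..2*pi}.
      0 < \<bar>x - y\<bar> \<and> \<bar>x - y\<bar> < 1 \<longrightarrow> \<bar>p x - p y\<bar> \<le> C / ln (1 / \<bar>x - y\<bar>))"

definition var_modular :: "(real \<Rightarrow> real) \<Rightarrow> (complex \<Rightarrow> complex) \<Rightarrow> ennreal" where
  "var_modular p g = (\<integral>\<^sup>+ \<theta>. ennreal (norm (g (cis \<theta>)) powr p \<theta>) * indicator {0..2*pi} \<theta> \<partial>lborel)"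

text \<open>Luxemburg norm of L^{p(.)}(T) (value \<infinity> if no admissible lambda).\<close>
definition lux_norm :: "(real \<Rightarrow> real) \<Rightarrow> (complex \<Rightarrow> complex) \<Rightarrow> ereal" where
  "lux_norm p g = (INF t \<in> {t::real. t > 0 \<and> var_modular p (\<lambda>z. g z / complex_of_real t) \<le> 1}. ereal t)"

definition hardy_var :: "(real \<Rightarrow> real) \<Rightarrow> (complex \<Rightarrow> complex) set" where
  "hardy_var p = {f. f holomorphic_on ball 0 1 \<and>
      (SUP r \<in> {0..<1::real}. lux_norm p (\<lambda>\<zeta>. f (complex_of_real r * \<zeta>))) < \<infinity>}"

definition hardy :: "real \<Rightarrow> (complex \<Rightarrow> complex) set" where
  "hardy q = {f. f holomorphic_on ball 0 1 \<and>
      (SUP r \<in> {0..<1::real}. \<integral>\<^sup>+ \<theta>. ennreal (norm (f (complex_of_real r * cis \<theta>)) powr q)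
           * indicator {0..2*pi} \<theta> \<partial>lborel) < (\<infinity>::ennreal)}"

end

theory Submission
  imports Defs
begin
lemma sin_ge_third: fixes y :: real assumes "0 \<le> y" "y \<le> 2" shows "y / 3 \<le> sin y"
proof -
  have "\<bar>sin y - (\<Sum>m<3. sin_coeff m * y ^ m)\<bar> \<le> inverse (fact 3) * \<bar>y\<bar> ^ 3"
    by (rule Maclaurin_sin_bound)
  moreover have "(\<Sum>m<3. sin_coeff m * y ^ m) = y"
    by (simp add: sin_coeff_def eval_nat_numeral)
  moreover have "(fact 3::real) = 6" by (simp add: numeral_3_eq_3)
  hence "inverse (fact 3) * \<bar>y\<bar> ^ 3 = y^3/6" using assms
    by (simp add: abs_of_nonneg inverse_eq_divide)
  ultimately have "\<bar>sin y - y\<bar> \<le> y ^ 3 / 6" by simp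
  moreover have "y^3 \<le> y * 4" using assms
  proof -
    have "y * y \<le> 2 * 2" using assms by (intro mult_mono) auto
    hence "y * (y * y) \<le> y * 4" using assms by (intro mult_left_mono) auto
    thus ?thesis by (simp add: power3_eq_cube)
  qed
  ultimately show ?thesis by linarith
qed

lemma abs_sin_half_ge: fixes x :: real assumes "\<bar>x\<bar> \<le> pi" shows "\<bar>x\<bar> / 6 \<le> \<bar>sin (x/2)\<bar>"
proof -
  have "\<bar>x\<bar>/2 \<le> 2" using assms pi_less_4 by linarith
  hence "(\<bar>x\<bar>/2) / 3 \<le> sin (\<bar>x\<bar>/2)" by (intro sin_ge_third) auto
  moreover have "\<bar>sin (x/2)\<bar> = sin (\<bar>x\<bar>/2)"
  proof (cases "x \<ge> 0")
    case True
    then show ?thesis using assms by (simp add: sin_ge_zero)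
  next
    case False
    have "0 \<le> sin (-(x/2))" using assms False by (intro sin_ge_zero) auto
    moreover have "sin (-(x/2)) = - sin (x/2)" by (rule sin_minus)
    moreover have "\<bar>x\<bar>/2 = -(x/2)" using False by simp
    ultimately show ?thesis by (simp only:)
  qed
  ultimately show ?thesis by simp
qed

lemma norm_one_minus_rcis_sq: "cmod (1 - complex_of_real r * cis t) ^ 2 = 1 - 2 * r * cos t + r^2"
proof -
  have h: "(1 - r*c)^2 + (r * s)^2 = 1 - 2*r*c + r^2*(s^2+c^2)" for s c :: real
    by (simp add: power2_eq_square algebra_simps)
  have "cmod (1 - complex_of_real r * cis t) ^ 2 = (1 - r * cos t)^2 + (r * sin t)^2"
    by (simp add: cmod_power2 cis.sel)
  also have "\<dots> = 1 - 2 * r * cos t + r^2 * (sin t ^ 2 + cos t ^ 2)"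
    using h by blast
  also have "\<dots> = 1 - 2 * r * cos t + r^2" by simp
  finally show ?thesis .
qed

lemma norm_one_minus_rcis_ge: assumes "0 \<le> r" "r \<le> 1"
  shows "\<bar>sin (t/2)\<bar> \<le> cmod (1 - complex_of_real r * cis t)"
proof -
  have c: "cos t = 1 - 2 * sin (t/2) ^ 2" using cos_double_sin[of "t/2"] by simp
  have "-1 \<le> cos t" "cos t \<le> 1" by auto
  have "sin (t/2)^2 = (1 - cos t)/2" using c by simp
  also have "\<dots> \<le> 1 - 2 * r * cos t + r^2"
  proof -
    have "0 \<le> 1 + cos t" using \<open>-1 \<le> cos t\<close> by linarith
    hence n1: "0 \<le> (1 + cos t)/2" by simp
    have "0 \<le> 1 - cos t" using \<open>cos t \<le> 1\<close> by linarith
    hence n1': "0 \<le> (1 - cos t)/2" by simp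
    have n2: "0 \<le> (1-r)^2" "0 \<le> r^2 + 2*r" using assms by auto
    have eq: "1 - 2 * r * cos t + r^2 - (1 - cos t)/2 = ((1 + cos t)/2) * (1-r)^2 + ((1 - cos t)/2) * (r^2 + 2*r)"
      by (simp add: power2_eq_square field_simps)
    have "((1 + cos t)/2) * (1-r)^2 + ((1 - cos t)/2) * (r^2 + 2*r) \<ge> 0"
      using n1 n1' n2 assms by (intro add_nonneg_nonneg mult_nonneg_nonneg) auto
    with eq show ?thesis by linarith
  qed
  finally have "\<bar>sin (t/2)\<bar>^2 \<le> cmod (1 - complex_of_real r * cis t) ^ 2"
    by (simp add: norm_one_minus_rcis_sq)
  thus ?thesis by (rule power2_le_imp_le) simp
qed

lemma norm_one_minus_rcis_le: assumes "0 \<le> r" "r \<le> 1"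
  shows "cmod (1 - complex_of_real r * cis t) \<le> (1 - r) + \<bar>t\<bar>"
proof -
  have "cmod (1 - cis t) ^ 2 = 4 * sin (t/2) ^ 2"
    using norm_one_minus_rcis_sq[of 1 t] cos_double_sin[of "t/2"] by simp
  also have "\<dots> \<le> 4 * (t/2)^2"
  proof -
    have "\<bar>sin (t/2)\<bar> \<le> \<bar>t/2\<bar>" by (rule abs_sin_x_le_abs_x)
    hence "sin (t/2)^2 \<le> (t/2)^2" by (simp only: abs_le_square_iff)
    thus ?thesis by simp
  qed
  also have "\<dots> = \<bar>t\<bar>^2" by (simp add: power2_eq_square)
  finally have 1: "cmod (1 - cis t) \<le> \<bar>t\<bar>" by (rule power2_le_imp_le) simp
  have "1 - complex_of_real r * cis t = (1 - cis t) + complex_of_real (1 - r) * cis t"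
    by (simp add: algebra_simps)
  hence "cmod (1 - complex_of_real r * cis t) \<le> cmod (1 - cis t) + cmod (complex_of_real (1 - r) * cis t)"
    by (metis norm_triangle_ineq)
  also have "cmod (complex_of_real (1 - r) * cis t) = 1 - r" using assms by (simp add: norm_mult abs_of_nonneg del: of_real_diff)
  finally show ?thesis using 1 by linarith
qed

lemma norm_one_minus_rcis_pos: assumes "0 \<le> r" "r < 1"
  shows "0 < cmod (1 - complex_of_real r * cis t)"
proof -
  have "cmod (complex_of_real r * cis t) = r" using assms by (simp add: norm_mult)
  hence "1 - complex_of_real r * cis t \<noteq> 0" using assms by auto
  thus ?thesis by simp
qed

lemma cis_minus_pi: "cis (t - pi) = - cis t"
  by (simp add: cis.ctr sin_diff cos_diff complex_eq_iff)

lemma one_plus: "1 + complex_of_real r * cis t = 1 - complex_of_real r * cis (t - pi)"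
  by (simp add: cis_minus_pi)

lemma intP_right:
  fixes s c R :: real assumes "s < 1" "R \<ge> 0"
  shows "(\<lambda>x. \<bar>x - c\<bar> powr (-s)) integrable_on {c..c+R}"
proof -
  have "((\<lambda>x. x powr (-s)) has_integral (R powr (-s+1) / (-s+1))) (cbox 0 R)"
    using has_integral_powr_from_0[of "-s" R] assms by simp
  from has_integral_affinity'[OF this, of 1 "-c"]
  have "((\<lambda>x. (x - c) powr (-s)) has_integral (R powr (-s+1) / (-s+1))) {c..c+R}"
    by (simp add: algebra_simps)
  hence "(\<lambda>x. (x - c) powr (-s)) integrable_on {c..c+R}" by blast
  thus ?thesis by (rule integrable_eq) auto
qed

lemma intP_left:
  fixes s c R :: real assumes "s < 1" "R \<ge> 0"
  shows "(\<lambda>x. \<bar>x - c\<bar> powr (-s)) integrable_on {c-R..c}"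
proof -
  have "(\<lambda>x. \<bar>x - (-c)\<bar> powr (-s)) integrable_on {-c..-c+R}"
    using intP_right assms by blast
  hence "(\<lambda>x. \<bar>-x - (-c)\<bar> powr (-s)) integrable_on {-(-c+R)..-(-c)}"
    by (rule Henstock_Kurzweil_Integration.integrable_reflect_real[where f="\<lambda>y. \<bar>y - -c\<bar> powr (-s)" and a="-c" and b="-c+R", THEN iffD2])
  moreover have "{-(-c+R)..-(-c)} = {c-R..c}" by simp
  ultimately show ?thesis by (auto intro: integrable_eq simp: abs_minus_commute)
qed

lemma intP:
  fixes s c R a b :: real assumes "s < 1" "c - R \<le> a" "b \<le> c + R"
  shows "(\<lambda>x. \<bar>x - c\<bar> powr (-s)) integrable_on {a..b}"
proof (cases "a \<le> b")
  case True
  have R: "R \<ge> 0" using assms True by linarith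
  have "(\<lambda>x. \<bar>x - c\<bar> powr (-s)) integrable_on {c-R..c+R}"
    using Henstock_Kurzweil_Integration.integrable_combine[OF _ _ intP_left[OF assms(1) R] intP_right[OF assms(1) R]] R by simp
  thus ?thesis by (rule integrable_on_subinterval) (use assms in auto)
qed auto


lemma powr_neg_bound:
  fixes d m s :: real assumes "0 < m" "m / 6 \<le> d" "0 \<le> s"
  shows "d powr (-s) \<le> 6 powr s * m powr (-s)"
proof -
  have "d powr (-s) \<le> (m/6) powr (-s)" using assms by (intro powr_mono2') auto
  also have "(m/6) powr (-s) = m powr (-s) / 6 powr (-s)" by (rule powr_divide)
  also have "6 powr (-s) = 1 / 6 powr s" by (rule powr_minus_divide)
  also have "m powr (-s) / (1 / 6 powr s) = 6 powr s * m powr (-s)" by simp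
  finally show ?thesis .
qed

lemma bound_minus:
  fixes r \<theta> s :: real
  assumes r: "0 \<le> r" "r < 1" and th: "0 < \<theta>" "\<theta> < 2*pi" and s: "0 \<le> s"
  shows "cmod (1 - complex_of_real r * cis \<theta>) powr (-s)
         \<le> 6 powr s * (\<bar>\<theta> - 0\<bar> powr (-s) + \<bar>\<theta> - 2*pi\<bar> powr (-s))"
proof -
  let ?d = "cmod (1 - complex_of_real r * cis \<theta>)"
  have d: "\<bar>sin (\<theta>/2)\<bar> \<le> ?d" using r by (intro norm_one_minus_rcis_ge) auto
  have nn: "0 \<le> 6 powr s * \<bar>\<theta> - 0\<bar> powr (-s)" "0 \<le> 6 powr s * \<bar>\<theta> - 2*pi\<bar> powr (-s)" by auto
  show ?thesis
  proof (cases "\<theta> \<le> pi")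
    case True
    have "\<bar>\<theta>\<bar> / 6 \<le> \<bar>sin (\<theta>/2)\<bar>" using True th by (intro abs_sin_half_ge) auto
    hence "?d powr (-s) \<le> 6 powr s * \<bar>\<theta> - 0\<bar> powr (-s)"
      using d th s by (intro powr_neg_bound) auto
    thus ?thesis using nn unfolding distrib_left by linarith
  next
    case False
    have "\<bar>\<theta> - 2*pi\<bar> / 6 \<le> \<bar>sin ((\<theta> - 2*pi)/2)\<bar>" using False th by (intro abs_sin_half_ge) auto
    also have "sin ((\<theta> - 2*pi)/2) = - sin (\<theta>/2)"
    proof -
      have e: "(\<theta> - 2*pi)/2 = \<theta>/2 - pi" by (simp add: field_simps)
      show ?thesis unfolding e by (simp add: sin_diff)
    qed
    finally have "\<bar>\<theta> - 2*pi\<bar> / 6 \<le> \<bar>sin (\<theta>/2)\<bar>" by simp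
    hence "?d powr (-s) \<le> 6 powr s * \<bar>\<theta> - 2*pi\<bar> powr (-s)"
      using d th s False by (intro powr_neg_bound) auto
    thus ?thesis using nn unfolding distrib_left by linarith
  qed
qed

lemma bound_plus:
  fixes r \<theta> s :: real
  assumes r: "0 \<le> r" "r < 1" and th: "0 \<le> \<theta>" "\<theta> \<le> 2*pi" "\<theta> \<noteq> pi" and s: "0 \<le> s"
  shows "cmod (1 + complex_of_real r * cis \<theta>) powr (-s) \<le> 6 powr s * \<bar>\<theta> - pi\<bar> powr (-s)"
proof -
  have d: "\<bar>sin ((\<theta> - pi)/2)\<bar> \<le> cmod (1 + complex_of_real r * cis \<theta>)"
    unfolding one_plus using r by (intro norm_one_minus_rcis_ge) auto
  have "\<bar>\<theta> - pi\<bar> / 6 \<le> \<bar>sin ((\<theta> - pi)/2)\<bar>" using th by (intro abs_sin_half_ge) auto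
  thus ?thesis using d th s by (intro powr_neg_bound) auto
qed

lemma LB_integral:
  fixes \<epsilon> b K c :: real assumes "0 < \<epsilon>" "0 < b" "0 < K"
  shows "((\<lambda>\<theta>. 1 / (K * (\<epsilon> + (\<theta> - c)))) has_integral ((ln (\<epsilon> + b) - ln \<epsilon>) / K)) {c..c+b}"
proof -
  have "((\<lambda>\<theta>. 1 / (K * (\<epsilon> + (\<theta> - c)))) has_integral
        ((\<lambda>\<theta>. ln (\<epsilon> + (\<theta> - c)) / K) (c+b) - (\<lambda>\<theta>. ln (\<epsilon> + (\<theta> - c)) / K) c)) {c..c+b}"
  proof (rule fundamental_theorem_of_calculus)
    show "c \<le> c + b" using assms by simp
    fix x assume x: "x \<in> {c..c+b}"
    have "((\<lambda>\<theta>. ln (\<epsilon> + (\<theta> - c)) / K) has_real_derivative (1 / (K * (\<epsilon> + (x - c))))) (at x within {c..c+b})"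
    proof -
      have pos: "0 < \<epsilon> + (x - c)" using x assms by auto
      have "((\<lambda>\<theta>. ln (\<epsilon> + (\<theta> - c)) / K) has_real_derivative (1 / (\<epsilon> + (x - c)) / K)) (at x within {c..c+b})"
        using pos assms by (auto intro!: derivative_eq_intros)
      moreover have "1 / (\<epsilon> + (x - c)) / K = 1 / (K * (\<epsilon> + (x - c)))" by simp
      ultimately show ?thesis by (simp add: mult.commute)
    qed
    thus "((\<lambda>\<theta>. ln (\<epsilon> + (\<theta> - c)) / K) has_vector_derivative (1 / (K * (\<epsilon> + (x - c))))) (at x within {c..c+b})"
      by (simp add: has_real_derivative_iff_has_vector_derivative)
  qed
  thus ?thesis by (simp add: diff_divide_distrib)
qed

lemma modular_upper:
  fixes p B :: "real \<Rightarrow> real" and g :: "complex \<Rightarrow> complex" and I :: real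
  assumes p1: "\<forall>\<theta>\<in>{0..2*pi}. 1 \<le> p \<theta>"
    and B: "(B has_integral I) {0..2*pi}" and Bnn: "\<forall>\<theta>\<in>{0..2*pi}. 0 \<le> B \<theta>"
    and bnd: "AE \<theta> in lborel. \<theta> \<in> {0..2*pi} \<longrightarrow> norm (g (cis \<theta>)) powr p \<theta> \<le> B \<theta>"
  shows "lux_norm p g \<le> ereal (I + 1)"
proof -
  have I0: "0 \<le> I" using has_integral_nonneg[OF B] Bnn by auto
  define t where "t = I + 1"
  have t1: "1 \<le> t" using I0 t_def by simp
  have Bt: "((\<lambda>\<theta>. B \<theta> / t) has_integral (I / t)) {0..2*pi}" using has_integral_divide[OF B] .
  have "var_modular p (\<lambda>z. g z / complex_of_real t)
        \<le> (\<integral>\<^sup>+ \<theta>. ennreal (B \<theta> / t) * indicator {0..2*pi} \<theta> \<partial>lborel)"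
    unfolding var_modular_def
  proof (rule nn_integral_mono_AE)
    show "AE \<theta> in lborel. ennreal (cmod (g (cis \<theta>) / complex_of_real t) powr p \<theta>) * indicator {0..2*pi} \<theta>
            \<le> ennreal (B \<theta> / t) * indicator {0..2*pi} \<theta>"
      using bnd
    proof eventually_elim
      case (elim \<theta>)
      show ?case
      proof (cases "\<theta> \<in> {0..2*pi}")
        case True
        have le: "norm (g (cis \<theta>)) powr p \<theta> \<le> B \<theta>" using elim True by auto
        have pt: "1 \<le> p \<theta>" using p1 True by auto
        have "cmod (g (cis \<theta>) / complex_of_real t) powr p \<theta> = norm (g (cis \<theta>)) powr p \<theta> / t powr p \<theta>"
          using t1 by (simp add: norm_divide powr_divide)
        also have "\<dots> \<le> norm (g (cis \<theta>)) powr p \<theta> / t"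
        proof (rule divide_left_mono)
          have "t powr 1 \<le> t powr p \<theta>" using t1 pt by (intro powr_mono) auto
          thus "t \<le> t powr p \<theta>" using t1 by simp
        qed (use t1 in auto)
        also have "\<dots> \<le> B \<theta> / t" using le t1 by (intro divide_right_mono) auto
        finally show ?thesis using True by (simp add: ennreal_leI)
      qed simp
    qed
  qed
  also have "\<dots> = ennreal (I / t)"
    by (rule nn_integral_has_integral_lebesgue'[OF _ Bt]) (use Bnn t1 in auto)
  also have "\<dots> \<le> 1" using t_def I0 by simp
  finally have "var_modular p (\<lambda>z. g z / complex_of_real t) \<le> 1" .
  hence "t \<in> {t. t > 0 \<and> var_modular p (\<lambda>z. g z / complex_of_real t) \<le> 1}" using t1 by simp
  hence "lux_norm p g \<le> ereal t" unfolding lux_norm_def by (rule INF_lower)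
  thus ?thesis using t_def by simp
qed

lemma lux_unbounded:
  fixes p :: "real \<Rightarrow> real" and f :: "complex \<Rightarrow> complex"
  assumes "\<forall>L>0. \<exists>r\<in>{0..<1}. \<forall>t. 0 < t \<and> t < L \<longrightarrow>
              1 < var_modular p (\<lambda>z. f (complex_of_real r * z) / complex_of_real t)"
  shows "\<not> (SUP r\<in>{0..<1::real}. lux_norm p (\<lambda>\<zeta>. f (complex_of_real r * \<zeta>))) < \<infinity>"
proof
  let ?S = "SUP r\<in>{0..<1::real}. lux_norm p (\<lambda>\<zeta>. f (complex_of_real r * \<zeta>))"
  assume "?S < \<infinity>"
  then obtain L where L: "L > 0" "?S < ereal L"
  proof (cases ?S)
    case (real s)
    then show ?thesis using that[of "\<bar>s\<bar>+1"] by auto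
  next
    case MInf
    then show ?thesis using that[of 1] by auto
  qed (use \<open>?S < \<infinity>\<close> in auto)
  obtain r where r: "r \<in> {0..<1}" and big: "\<forall>t. 0 < t \<and> t < L \<longrightarrow>
              1 < var_modular p (\<lambda>z. f (complex_of_real r * z) / complex_of_real t)"
    using assms L by blast
  have "lux_norm p (\<lambda>\<zeta>. f (complex_of_real r * \<zeta>)) \<le> ?S" using r by (intro SUP_upper)
  hence "lux_norm p (\<lambda>\<zeta>. f (complex_of_real r * \<zeta>)) < ereal L" using L by simp
  then obtain t where "t \<in> {t. t > 0 \<and> var_modular p (\<lambda>z. f (complex_of_real r * z) / complex_of_real t) \<le> 1}"
    "ereal t < ereal L"
    unfolding lux_norm_def INF_less_iff by blast
  thus False using big by force
qed

lemma hardy_mem: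
  fixes B :: "real \<Rightarrow> real" and f :: "complex \<Rightarrow> complex" and I q :: real
  assumes holo: "f holomorphic_on ball 0 1"
    and B: "(B has_integral I) {0..2*pi}" and Bnn: "\<forall>\<theta>\<in>{0..2*pi}. 0 \<le> B \<theta>"
    and bnd: "\<forall>r\<in>{0..<1}. AE \<theta> in lborel. \<theta> \<in> {0..2*pi} \<longrightarrow> norm (f (complex_of_real r * cis \<theta>)) powr q \<le> B \<theta>"
  shows "f \<in> hardy q"
proof -
  have "(SUP r \<in> {0..<1::real}. \<integral>\<^sup>+ \<theta>. ennreal (norm (f (complex_of_real r * cis \<theta>)) powr q)
           * indicator {0..2*pi} \<theta> \<partial>lborel) \<le> ennreal I"
  proof (rule SUP_least)
    fix r :: real assume r: "r \<in> {0..<1}"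
    have "(\<integral>\<^sup>+ \<theta>. ennreal (norm (f (complex_of_real r * cis \<theta>)) powr q) * indicator {0..2*pi} \<theta> \<partial>lborel)
        \<le> (\<integral>\<^sup>+ \<theta>. ennreal (B \<theta>) * indicator {0..2*pi} \<theta> \<partial>lborel)"
    proof (rule nn_integral_mono_AE)
      show "AE \<theta> in lborel. ennreal (norm (f (complex_of_real r * cis \<theta>)) powr q) * indicator {0..2*pi} \<theta>
              \<le> ennreal (B \<theta>) * indicator {0..2*pi} \<theta>"
        using bnd r
      proof -
        have "AE \<theta> in lborel. \<theta> \<in> {0..2*pi} \<longrightarrow> norm (f (complex_of_real r * cis \<theta>)) powr q \<le> B \<theta>"
          using bnd r by blast
        thus ?thesis
          by eventually_elim (auto simp: ennreal_leI indicator_def)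
      qed
    qed
    also have "\<dots> = ennreal I"
      by (rule nn_integral_has_integral_lebesgue'[OF _ B]) (use Bnn in auto)
    finally show "(\<integral>\<^sup>+ \<theta>. ennreal (norm (f (complex_of_real r * cis \<theta>)) powr q) * indicator {0..2*pi} \<theta> \<partial>lborel) \<le> ennreal I" .
  qed
  also have "ennreal I < \<infinity>" by simp
  finally show ?thesis unfolding hardy_def using holo by simp
qed

lemma hardy_not:
  fixes f :: "complex \<Rightarrow> complex" and q :: real
  assumes "\<forall>M::real. \<exists>r\<in>{0..<1::real}. ennreal M \<le> (\<integral>\<^sup>+ \<theta>. ennreal (norm (f (complex_of_real r * cis \<theta>)) powr q) * indicator {0..2*pi} \<theta> \<partial>lborel)"
  shows "f \<notin> hardy q"
proof
  assume "f \<in> hardy q"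
  then have "(SUP r \<in> {0..<1::real}. \<integral>\<^sup>+ \<theta>. ennreal (norm (f (complex_of_real r * cis \<theta>)) powr q)
           * indicator {0..2*pi} \<theta> \<partial>lborel) < (\<infinity>::ennreal)" (is "?S < _") unfolding hardy_def by simp
  then obtain M where M: "M \<ge> 0" "?S = ennreal M" unfolding less_top_ennreal[symmetric] using less_top_ennreal by auto
  obtain r where r: "r \<in> {0..<1::real}" and big: "ennreal (M+1) \<le> (\<integral>\<^sup>+ \<theta>. ennreal (norm (f (complex_of_real r * cis \<theta>)) powr q) * indicator {0..2*pi} \<theta> \<partial>lborel)"
    using assms by blast
  have "(\<integral>\<^sup>+ \<theta>. ennreal (norm (f (complex_of_real r * cis \<theta>)) powr q) * indicator {0..2*pi} \<theta> \<partial>lborel) \<le> ?S"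
    using r by (intro SUP_upper)
  hence up: "(\<integral>\<^sup>+ \<theta>. ennreal (norm (f (complex_of_real r * cis \<theta>)) powr q) * indicator {0..2*pi} \<theta> \<partial>lborel) \<le> ennreal M"
    using M by simp
  have "ennreal (M+1) \<le> ennreal M" using order_trans[OF big up] .
  thus False using M by (subst (asm) ennreal_le_iff) auto
qed

definition pex :: "real \<Rightarrow> real \<Rightarrow> real \<Rightarrow> real" where
  "pex q1 q2 \<theta> = q1 + (q2 - q1) * min 1 (max 0 (2 * cos \<theta>))"

lemma pex_periodic: "pex q1 q2 (x + 2*pi) = pex q1 q2 x"
  unfolding pex_def by simp

lemma pex_range: assumes "q1 \<le> q2" shows "q1 \<le> pex q1 q2 \<theta> \<and> pex q1 q2 \<theta> \<le> q2"
proof -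
  have "0 \<le> min 1 (max 0 (2 * cos \<theta>))" "min 1 (max 0 (2 * cos \<theta>)) \<le> 1" by auto
  hence "0 \<le> (q2 - q1) * min 1 (max 0 (2 * cos \<theta>))" "(q2 - q1) * min 1 (max 0 (2 * cos \<theta>)) \<le> (q2 - q1)"
    using assms by (auto intro: mult_nonneg_nonneg mult_left_le)
  thus ?thesis unfolding pex_def by auto
qed

lemma pex_q2: "1/2 \<le> cos \<theta> \<Longrightarrow> pex q1 q2 \<theta> = q2"
  unfolding pex_def by simp

lemma pex_q1: "cos \<theta> \<le> 0 \<Longrightarrow> pex q1 q2 \<theta> = q1"
  unfolding pex_def by simp

lemma clamp_lip: "\<bar>min 1 (max 0 a) - min 1 (max 0 b)\<bar> \<le> \<bar>a - b\<bar>" for a b :: real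
  by (auto simp: min_def max_def)

lemma cos_lip: "\<bar>cos x - cos y\<bar> \<le> \<bar>x - y\<bar>" for x y :: real
proof -
  have "\<bar>cos x - cos y\<bar> = 2 * \<bar>sin ((x + y) / 2)\<bar> * \<bar>sin ((y - x) / 2)\<bar>"
    by (simp add: cos_diff_cos abs_mult)
  also have "\<dots> \<le> 2 * 1 * \<bar>(y - x) / 2\<bar>"
    by (intro mult_mono abs_sin_x_le_abs_x) auto
  finally show ?thesis by simp
qed

lemma pex_lip: assumes "q1 \<le> q2" shows "\<bar>pex q1 q2 x - pex q1 q2 y\<bar> \<le> 2 * (q2 - q1) * \<bar>x - y\<bar>"
proof -
  have "\<bar>pex q1 q2 x - pex q1 q2 y\<bar> = (q2 - q1) * \<bar>min 1 (max 0 (2 * cos x)) - min 1 (max 0 (2 * cos y))\<bar>"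
    unfolding pex_def using assms by (simp add: abs_mult right_diff_distrib[symmetric])
  also have "\<dots> \<le> (q2 - q1) * \<bar>2 * cos x - 2 * cos y\<bar>"
    using assms by (intro mult_left_mono clamp_lip) auto
  also have "\<bar>2 * cos x - 2 * cos y\<bar> = 2 * \<bar>cos x - cos y\<bar>"
    by (subst right_diff_distrib[symmetric]) (simp only: abs_mult abs_numeral)
  also have "(q2 - q1) * (2 * \<bar>cos x - cos y\<bar>) \<le> (q2 - q1) * (2 * \<bar>x - y\<bar>)"
    using assms cos_lip[of x y] by (intro mult_left_mono) auto
  finally show ?thesis by (simp add: algebra_simps)
qed

lemma pex_log_holder: assumes "q1 < q2" shows "log_holder (pex q1 q2)"
  unfolding log_holder_def
proof (intro exI[of _ "2 * (q2 - q1)"] conjI ballI impI)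
  show "0 < 2 * (q2 - q1)" using assms by simp
  fix x y :: real assume d: "0 < \<bar>x - y\<bar> \<and> \<bar>x - y\<bar> < 1"
  let ?d = "\<bar>x - y\<bar>"
  have lnpos: "0 < ln (1 / ?d)" using d by simp
  have "ln (1 / ?d) \<le> 1 / ?d - 1" using d by (intro ln_le_minus_one) auto
  hence "ln (1 / ?d) \<le> 1 / ?d" by simp
  hence "?d * ln (1 / ?d) \<le> 1" using d by (simp add: field_simps)
  hence "?d \<le> 1 / ln (1 / ?d)" using lnpos by (simp add: field_simps)
  hence "2 * (q2 - q1) * ?d \<le> 2 * (q2 - q1) * (1 / ln (1 / ?d))"
    using assms by (intro mult_left_mono) auto
  thus "\<bar>pex q1 q2 x - pex q1 q2 y\<bar> \<le> 2 * (q2 - q1) / ln (1 / ?d)"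
    using pex_lip[of q1 q2 x y] assms by simp
qed

definition F1 :: "real \<Rightarrow> complex \<Rightarrow> complex" where
  "F1 q2 z = (1 - z) powr complex_of_real (-(1/q2))"
definition F2 :: "real \<Rightarrow> complex \<Rightarrow> complex" where
  "F2 q2 z = (1 + z) powr complex_of_real (-(1/q2))"

lemma F1_holo: "F1 q2 holomorphic_on ball 0 1"
  unfolding F1_def
proof (intro holomorphic_intros)
  fix z :: complex assume "z \<in> ball 0 1"
  hence "Re z < 1" using abs_Re_le_cmod[of z] by auto
  thus "1 - z \<notin> \<real>\<^sub>\<le>\<^sub>0" by (auto simp: complex_nonpos_Reals_iff)
qed

lemma F2_holo: "F2 q2 holomorphic_on ball 0 1"
  unfolding F2_def
proof (intro holomorphic_intros)
  fix z :: complex assume "z \<in> ball 0 1"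
  hence "-1 < Re z" using abs_Re_le_cmod[of z] by auto
  thus "1 + z \<notin> \<real>\<^sub>\<le>\<^sub>0" by (auto simp: complex_nonpos_Reals_iff)
qed

lemma F1_norm: "norm (F1 q2 w) = cmod (1 - w) powr (-(1/q2))"
  unfolding F1_def by (subst norm_powr_real_powr') auto

lemma F2_norm: "norm (F2 q2 w) = cmod (1 + w) powr (-(1/q2))"
  unfolding F2_def by (subst norm_powr_real_powr') auto

lemma powr_pow_neg: "(d powr (-(1/q2))) powr x = d powr (-(x/q2))" for d :: real
  by (simp add: powr_powr)

lemma F1_hardy: assumes "0 < q" "q < q2" shows "F1 q2 \<in> hardy q"
proof -
  define s where "s = q / q2"
  have s: "0 \<le> s" "s < 1" using assms by (auto simp: s_def)
  define B where "B = (\<lambda>\<theta>::real. 6 powr s * (\<bar>\<theta> - 0\<bar> powr (-s) + \<bar>\<theta> - 2*pi\<bar> powr (-s)))"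
  have i1: "(\<lambda>\<theta>. \<bar>\<theta> - 0\<bar> powr (-s)) integrable_on {0..2*pi}" using s by (intro intP[where R="2*pi"]) auto
  have i2: "(\<lambda>\<theta>. \<bar>\<theta> - 2*pi\<bar> powr (-s)) integrable_on {0..2*pi}" using s by (intro intP[where R="2*pi"]) auto
  obtain I where BI: "(B has_integral I) {0..2*pi}"
    using has_integral_mult_right[OF integrable_integral[OF Henstock_Kurzweil_Integration.integrable_add[OF i1 i2]], of "6 powr s"]
    unfolding B_def by blast
  show ?thesis
  proof (rule hardy_mem[OF F1_holo BI])
    show "\<forall>\<theta>\<in>{0..2*pi}. 0 \<le> B \<theta>" unfolding B_def by auto
    show "\<forall>r\<in>{0..<1}. AE \<theta> in lborel. \<theta> \<in> {0..2*pi} \<longrightarrow> norm (F1 q2 (complex_of_real r * cis \<theta>)) powr q \<le> B \<theta>"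
    proof
      fix r :: real assume r: "r \<in> {0..<1}"
      show "AE \<theta> in lborel. \<theta> \<in> {0..2*pi} \<longrightarrow> norm (F1 q2 (complex_of_real r * cis \<theta>)) powr q \<le> B \<theta>"
        using AE_lborel_singleton[of 0] AE_lborel_singleton[of "2*pi"]
      proof eventually_elim
        case (elim \<theta>)
        show ?case
        proof
          assume th: "\<theta> \<in> {0..2*pi}"
          have "norm (F1 q2 (complex_of_real r * cis \<theta>)) powr q = cmod (1 - complex_of_real r * cis \<theta>) powr (-s)"
            unfolding F1_norm powr_pow_neg s_def by simp
          also have "\<dots> \<le> B \<theta>" unfolding B_def
            using r th elim s by (intro bound_minus) auto
          finally show "norm (F1 q2 (complex_of_real r * cis \<theta>)) powr q \<le> B \<theta>" .
        qed
      qed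
    qed
  qed
qed

lemma F2_not_hardy: assumes "0 < q2" shows "F2 q2 \<notin> hardy q2"
proof (rule hardy_not, intro allI)
  fix M :: real
  define \<epsilon> where "\<epsilon> = 1 / exp (\<bar>M\<bar> + 1)"
  have e0: "0 < \<epsilon>" unfolding \<epsilon>_def by simp
  have "2 \<le> exp (\<bar>M\<bar> + 1)" using exp_ge_add_one_self[of "\<bar>M\<bar> + 1"] by linarith
  hence e1: "\<epsilon> < 1" unfolding \<epsilon>_def by simp
  have lne: "ln \<epsilon> = -(\<bar>M\<bar> + 1)" unfolding \<epsilon>_def by (simp add: ln_div)
  define r where "r = 1 - \<epsilon>"
  have r: "r \<in> {0..<1}" using e0 e1 unfolding r_def by auto
  have LB: "((\<lambda>\<theta>. 1 / (1 * (\<epsilon> + (\<theta> - pi)))) has_integral ((ln (\<epsilon> + 1) - ln \<epsilon>) / 1)) {pi..pi+1}"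
    using LB_integral[of \<epsilon> 1 1 pi] e0 by simp
  have "ennreal M \<le> ennreal ((ln (\<epsilon> + 1) - ln \<epsilon>) / 1)"
  proof (rule ennreal_leI)
    have "0 < ln (\<epsilon> + 1)" using e0 by simp
    thus "M \<le> (ln (\<epsilon> + 1) - ln \<epsilon>) / 1" using lne by simp
  qed
  also have "\<dots> = (\<integral>\<^sup>+ \<theta>. ennreal (1 / (1 * (\<epsilon> + (\<theta> - pi)))) * indicator {pi..pi+1} \<theta> \<partial>lborel)"
    by (rule nn_integral_has_integral_lebesgue'[OF _ LB, symmetric]) (use e0 in auto)
  also have "\<dots> \<le> (\<integral>\<^sup>+ \<theta>. ennreal (norm (F2 q2 (complex_of_real r * cis \<theta>)) powr q2) * indicator {0..2*pi} \<theta> \<partial>lborel)"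
  proof (rule nn_integral_mono)
    fix \<theta> :: real
    show "ennreal (1 / (1 * (\<epsilon> + (\<theta> - pi)))) * indicator {pi..pi+1} \<theta>
          \<le> ennreal (norm (F2 q2 (complex_of_real r * cis \<theta>)) powr q2) * indicator {0..2*pi} \<theta>"
    proof (cases "\<theta> \<in> {pi..pi+1}")
      case True
      have th: "\<theta> \<in> {0..2*pi}" using True pi_gt3 by auto
      let ?d = "cmod (1 + complex_of_real r * cis \<theta>)"
      have deq: "?d = cmod (1 - complex_of_real r * cis (\<theta> - pi))" by (simp only: one_plus)
      have dpos: "0 < ?d" unfolding deq using r by (intro norm_one_minus_rcis_pos) auto
      have dle: "?d \<le> \<epsilon> + (\<theta> - pi)" unfolding deq
        using norm_one_minus_rcis_le[of r "\<theta> - pi"] r True unfolding r_def by auto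
      have "norm (F2 q2 (complex_of_real r * cis \<theta>)) powr q2 = ?d powr (-1)"
        unfolding F2_norm powr_pow_neg using assms by simp
      also have "\<dots> = 1 / ?d" using dpos by (simp add: powr_minus_divide)
      finally have eq: "norm (F2 q2 (complex_of_real r * cis \<theta>)) powr q2 = 1 / ?d" .
      have "1 / (1 * (\<epsilon> + (\<theta> - pi))) \<le> 1 / ?d"
        using dpos dle by (intro frac_le) auto
      thus ?thesis using True th eq by (simp add: ennreal_leI)
    qed simp
  qed
  finally show "\<exists>r\<in>{0..<1::real}. ennreal M \<le> (\<integral>\<^sup>+ \<theta>. ennreal (norm (F2 q2 (complex_of_real r * cis \<theta>)) powr q2) * indicator {0..2*pi} \<theta> \<partial>lborel)"
    using r by blast
qed

lemma F1_not_var: assumes "0 < q2" shows "F1 q2 \<notin> hardy_var (pex q1 q2)"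
proof -
  have "\<not> (SUP r\<in>{0..<1::real}. lux_norm (pex q1 q2) (\<lambda>\<zeta>. F1 q2 (complex_of_real r * \<zeta>))) < \<infinity>"
  proof (rule lux_unbounded, intro allI impI)
    fix L :: real assume L: "0 < L"
    define K where "K = L powr q2"
    have K0: "0 < K" unfolding K_def using L by simp
    define b where "b = pi / 3"
    have b0: "0 < b" "b \<le> 4/3" unfolding b_def using pi_less_4 by auto
    define \<epsilon> where "\<epsilon> = b / exp (K + 1)"
    have e0: "0 < \<epsilon>" unfolding \<epsilon>_def using b0 by simp
    have "2 \<le> exp (K + 1)" using exp_ge_add_one_self[of "K + 1"] K0 by linarith
    hence "\<epsilon> \<le> b / 2" unfolding \<epsilon>_def using b0 by (intro divide_left_mono) auto
    hence e1: "\<epsilon> < 1" using b0 by simp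
    have lne: "ln \<epsilon> = ln b - (K + 1)" unfolding \<epsilon>_def using b0 by (simp add: ln_div)
    define r where "r = 1 - \<epsilon>"
    have r: "r \<in> {0..<1}" using e0 e1 unfolding r_def by auto
    show "\<exists>r\<in>{0..<1}. \<forall>t. 0 < t \<and> t < L \<longrightarrow> 1 < var_modular (pex q1 q2) (\<lambda>z. F1 q2 (complex_of_real r * z) / complex_of_real t)"
    proof (intro bexI[OF _ r] allI impI)
    fix t :: real assume "0 < t \<and> t < L"
    have LB: "((\<lambda>\<theta>. 1 / (K * (\<epsilon> + (\<theta> - 0)))) has_integral ((ln (\<epsilon> + b) - ln \<epsilon>) / K)) {0..0+b}"
      using LB_integral[of \<epsilon> b K 0] e0 b0 K0 by simp
    have "ennreal 1 < ennreal ((ln (\<epsilon> + b) - ln \<epsilon>) / K)"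
    proof -
      have "ln b < ln (\<epsilon> + b)" using e0 b0 by simp
      hence "K < ln (\<epsilon> + b) - ln \<epsilon>" using lne by simp
      hence "1 < (ln (\<epsilon> + b) - ln \<epsilon>) / K" using K0 by simp
      thus ?thesis by simp
    qed
    also have "ennreal ((ln (\<epsilon> + b) - ln \<epsilon>) / K) = (\<integral>\<^sup>+ \<theta>. ennreal (1 / (K * (\<epsilon> + (\<theta> - 0)))) * indicator {0..0+b} \<theta> \<partial>lborel)"
      by (rule nn_integral_has_integral_lebesgue'[OF _ LB, symmetric]) (use e0 K0 in auto)
    also have "\<dots> \<le> (\<integral>\<^sup>+ \<theta>. ennreal (norm (F1 q2 (complex_of_real r * cis \<theta>) / complex_of_real t) powr pex q1 q2 \<theta>) * indicator {0..2*pi} \<theta> \<partial>lborel)"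
    proof (rule nn_integral_mono)
      fix \<theta> :: real
      show "ennreal (1 / (K * (\<epsilon> + (\<theta> - 0)))) * indicator {0..0+b} \<theta>
          \<le> ennreal (norm (F1 q2 (complex_of_real r * cis \<theta>) / complex_of_real t) powr pex q1 q2 \<theta>) * indicator {0..2*pi} \<theta>"
      proof (cases "\<theta> \<in> {0..0+b}")
        case True
        have th: "\<theta> \<in> {0..2*pi}" using True b0 pi_gt3 by auto
        have "cos (pi/3) \<le> cos \<theta>" using True unfolding b_def by (intro cos_monotone_0_pi_le) auto
        hence pq: "pex q1 q2 \<theta> = q2" using cos_60 by (intro pex_q2) simp
        let ?d = "cmod (1 - complex_of_real r * cis \<theta>)"
        have dpos: "0 < ?d" using r by (intro norm_one_minus_rcis_pos) auto
        have dle: "?d \<le> \<epsilon> + (\<theta> - 0)"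
          using norm_one_minus_rcis_le[of r "\<theta>"] r True unfolding r_def by auto
        have tK: "t powr q2 \<le> K" unfolding K_def using \<open>0 < t \<and> t < L\<close> assms by (intro powr_mono2) auto
        have tpos: "0 < t powr q2" using \<open>0 < t \<and> t < L\<close> by simp
        have "norm (F1 q2 (complex_of_real r * cis \<theta>) / complex_of_real t) powr pex q1 q2 \<theta>
              = (?d powr (-(1/q2)) / t) powr q2"
          unfolding pq norm_divide F1_norm using \<open>0 < t \<and> t < L\<close> by simp
        also have "\<dots> = ?d powr (-(q2/q2)) / t powr q2" by (simp only: powr_divide powr_pow_neg)
        also have "\<dots> = 1 / (t powr q2 * ?d)" using dpos assms by (simp add: powr_minus_divide)
        finally have eq: "norm (F1 q2 (complex_of_real r * cis \<theta>) / complex_of_real t) powr pex q1 q2 \<theta> = 1 / (t powr q2 * ?d)" .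
        have "t powr q2 * ?d \<le> K * (\<epsilon> + (\<theta> - 0))"
          using tK dle dpos tpos K0 by (intro mult_mono) auto
        hence "1 / (K * (\<epsilon> + (\<theta> - 0))) \<le> 1 / (t powr q2 * ?d)"
          using dpos tpos by (intro frac_le) auto
        thus ?thesis using True th eq by (simp add: ennreal_leI)
      qed simp
    qed
    finally show "1 < var_modular (pex q1 q2) (\<lambda>z. F1 q2 (complex_of_real r * z) / complex_of_real t)"
      unfolding var_modular_def by simp
    qed
  qed
  thus ?thesis unfolding hardy_var_def by blast
qed

lemma F2_var: assumes "1 < q1" "q1 < q2" shows "F2 q2 \<in> hardy_var (pex q1 q2)"
proof -
  define s where "s = q1 / q2"
  have s: "0 \<le> s" "s < 1" using assms by (auto simp: s_def)
  define B where "B = (\<lambda>\<theta>::real. 1 + 6 powr s * \<bar>\<theta> - pi\<bar> powr (-s))"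
  have i1: "(\<lambda>\<theta>. \<bar>\<theta> - pi\<bar> powr (-s)) integrable_on {0..2*pi}" using s by (intro intP[where R="pi"]) auto
  have i0: "(\<lambda>\<theta>::real. 1::real) integrable_on {0..2*pi}" by (rule integrable_const_ivl)
  obtain I where BI: "(B has_integral I) {0..2*pi}"
    using Henstock_Kurzweil_Integration.has_integral_add[OF integrable_integral[OF i0] has_integral_mult_right[OF integrable_integral[OF i1], of "6 powr s"]]
    unfolding B_def by blast
  have Bnn: "\<forall>\<theta>\<in>{0..2*pi}. 0 \<le> B \<theta>" unfolding B_def by (auto intro!: add_nonneg_nonneg)
  have p1: "\<forall>\<theta>\<in>{0..2*pi}. 1 \<le> pex q1 q2 \<theta>"
  proof
    fix \<theta> :: real
    have "q1 \<le> pex q1 q2 \<theta>" using pex_range[of q1 q2 \<theta>] assms by simp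
    thus "1 \<le> pex q1 q2 \<theta>" using assms by simp
  qed
  have "(SUP r\<in>{0..<1::real}. lux_norm (pex q1 q2) (\<lambda>\<zeta>. F2 q2 (complex_of_real r * \<zeta>))) \<le> ereal (I + 1)"
  proof (rule SUP_least)
    fix r :: real assume r: "r \<in> {0..<1}"
    show "lux_norm (pex q1 q2) (\<lambda>\<zeta>. F2 q2 (complex_of_real r * \<zeta>)) \<le> ereal (I + 1)"
    proof (rule modular_upper[OF p1 BI Bnn])
      show "AE \<theta> in lborel. \<theta> \<in> {0..2*pi} \<longrightarrow> norm (F2 q2 (complex_of_real r * cis \<theta>)) powr pex q1 q2 \<theta> \<le> B \<theta>"
        using AE_lborel_singleton[of pi]
      proof eventually_elim
        case (elim \<theta>)
        show ?case
        proof
          assume th: "\<theta> \<in> {0..2*pi}"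
          let ?d = "cmod (1 + complex_of_real r * cis \<theta>)"
          have deq: "?d = cmod (1 - complex_of_real r * cis (\<theta> - pi))" by (simp only: one_plus)
          have dpos: "0 < ?d" unfolding deq using r by (intro norm_one_minus_rcis_pos) auto
          have eq: "norm (F2 q2 (complex_of_real r * cis \<theta>)) powr pex q1 q2 \<theta> = ?d powr (-(pex q1 q2 \<theta>/q2))"
            unfolding F2_norm powr_pow_neg by simp
          have Bge: "6 powr s * \<bar>\<theta> - pi\<bar> powr (-s) \<le> B \<theta>" "1 \<le> B \<theta>" unfolding B_def by auto
          show "norm (F2 q2 (complex_of_real r * cis \<theta>)) powr pex q1 q2 \<theta> \<le> B \<theta>"
          proof (cases "0 \<le> cos \<theta>")
            case True
            have "?d ^ 2 = 1 - 2 * r * cos (\<theta> - pi) + r^2" unfolding deq by (rule norm_one_minus_rcis_sq)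
            also have "cos (\<theta> - pi) = - cos \<theta>" by (simp add: cos_diff)
            finally have "1 ^ 2 \<le> ?d ^ 2" using True r by auto
            hence d1: "1 \<le> ?d" by (rule power2_le_imp_le) simp
            have "1 \<le> pex q1 q2 \<theta>" using p1 th by blast
            hence "0 \<le> pex q1 q2 \<theta> / q2" using assms by simp
            hence "?d powr (-(pex q1 q2 \<theta>/q2)) \<le> 1 powr (-(pex q1 q2 \<theta>/q2))"
              using d1 by (intro powr_mono2') auto
            thus ?thesis using eq Bge by simp
          next
            case False
            hence "pex q1 q2 \<theta> = q1" by (intro pex_q1) simp
            hence "?d powr (-(pex q1 q2 \<theta>/q2)) = ?d powr (-s)" by (simp add: s_def)
            also have "\<dots> \<le> 6 powr s * \<bar>\<theta> - pi\<bar> powr (-s)"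
              using r th elim s by (intro bound_plus) auto
            finally show ?thesis using eq Bge by simp
          qed
        qed
      qed
    qed
  qed
  also have "\<dots> < \<infinity>" by simp
  finally show ?thesis unfolding hardy_var_def using F2_holo by simp
qed

lemma hardy_var_ne:
  fixes q1 q2 q :: real
  assumes "1 < q1" and "q1 < q2" and "q1 \<le> q" "q \<le> q2"
  shows "hardy_var (pex q1 q2) \<noteq> hardy q"
proof (cases "q < q2")
  case True
  have "F1 q2 \<in> hardy q" using True assms by (intro F1_hardy) auto
  moreover have "F1 q2 \<notin> hardy_var (pex q1 q2)" using assms by (intro F1_not_var) auto
  ultimately show ?thesis by blast
next
  case False
  hence "q = q2" using assms by simp
  moreover have "F2 q2 \<notin> hardy q2" using assms by (intro F2_not_hardy) auto
  moreover have "F2 q2 \<in> hardy_var (pex q1 q2)" using assms by (intro F2_var) auto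
  ultimately show ?thesis by blast
qed

theorem proposition3p1:
  fixes q1 q2 :: real
  assumes "1 < q1" and "q1 < q2"
  shows "\<exists>p :: real \<Rightarrow> real.
           (\<forall>x. p (x + 2*pi) = p x) \<and> log_holder p \<and>
           (\<forall>\<theta>\<in>{0..2*pi}. q1 \<le> p \<theta> \<and> p \<theta> \<le> q2) \<and>
           (\<forall>q. q1 \<le> q \<and> q \<le> q2 \<longrightarrow> hardy_var p \<noteq> hardy q)"
proof (intro exI[of _ "pex q1 q2"] conjI allI ballI impI)
  show "pex q1 q2 (x + 2*pi) = pex q1 q2 x" for x by (rule pex_periodic)
  show "log_holder (pex q1 q2)" using assms by (intro pex_log_holder)
  show "q1 \<le> pex q1 q2 \<theta>" "pex q1 q2 \<theta> \<le> q2" for \<theta> using pex_range[of q1 q2 \<theta>] assms by auto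
  show "hardy_var (pex q1 q2) \<noteq> hardy q" if "q1 \<le> q \<and> q \<le> q2" for q
    using hardy_var_ne[of q1 q2 q] assms that by auto
qed

end
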